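(* Let $q\ge2$ be a fixed even integer. For every $n$ there exists a code $\mathcal{C}\subseteq\Sigma_q^n$ capable of correcting a reverse-complement duplication of arbitrary length (i.e. $RC_k^1(\boldsymbol{x})\cap RC_k^1(\boldsymbol{z})=\varnothing$ for all distinct $\boldsymbol{x},\boldsymbol{z}\in\mathcal{C}$ and all $k\ge1$) with redundancy $n-\log_q|\mathcal{C}|\le 2\log_q n+\log_q\log_q n+O(1)$; in particular the asymptotic rate $\log_q|\mathcal{C}|/n$ tends to $1$.
   Context: $\Sigma_q=\{0,\dots,q-1\}$. A complement operation is a fixed bijection $a\mapsto\overline{a}$ on $\Sigma_q$ with $\overline{a}\ne a$, $\overline{\overline{a}}=a$; $\boldsymbol{v}^{RC}=\overline{v_k}\cdots\overline{v_1}$ for $\boldsymbol{v}=v_1\cdots v_k$. For $\boldsymbol{x}=\boldsymbol{u}\boldsymbol{v}\boldsymbol{w}\in\Sigma_q^n$ with $|\boldsymbol{u}|=i-1$, $|\boldsymbol{v}|=k$, $RC_{k,i}(\boldsymbol{x})=\boldsymbol{u}\boldsymbol{v}\boldsymbol{v}^{RC}\boldsymbol{w}$, and $RC_k^1(\boldsymbol{x})=\{RC_{k,i}(\boldsymbol{x}):i\in[1,n-k+1]\}$ (empty if $k>n$). The $O(1)$ term depends only on $q$. *)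

theory Defs
  imports Complex_Main
begin

definition complement_op :: "nat \<Rightarrow> (nat \<Rightarrow> nat) \<Rightarrow> bool" where
  "complement_op q cmp \<longleftrightarrow>
     (\<forall>a<q. cmp a < q \<and> cmp a \<noteq> a \<and> cmp (cmp a) = a)"

definition words :: "nat \<Rightarrow> nat \<Rightarrow> nat list set" where
  "words q n = {x. length x = n \<and> (\<forall>a\<in>set x. a < q)}"

definition rc :: "(nat \<Rightarrow> nat) \<Rightarrow> nat list \<Rightarrow> nat list" where
  "rc cmp v = rev (map cmp v)"

definition RC_dup :: "(nat \<Rightarrow> nat) \<Rightarrow> nat \<Rightarrow> nat \<Rightarrow> nat list \<Rightarrow> nat list" where
  "RC_dup cmp k i x =
     (let u = take (i - 1) x; v = take k (drop (i - 1) x); w = drop (i - 1 + k) x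
      in u @ v @ rc cmp v @ w)"

definition RC_ball :: "(nat \<Rightarrow> nat) \<Rightarrow> nat \<Rightarrow> nat list \<Rightarrow> nat list set" where
  "RC_ball cmp k x =
     (if k > length x then {} else {RC_dup cmp k i x | i. 1 \<le> i \<and> i \<le> length x - k + 1})"

definition corrects_RC_dup :: "(nat \<Rightarrow> nat) \<Rightarrow> nat list set \<Rightarrow> bool" where
  "corrects_RC_dup cmp C \<longleftrightarrow>
     (\<forall>x\<in>C. \<forall>z\<in>C. x \<noteq> z \<longrightarrow> (\<forall>k\<ge>1. RC_ball cmp k x \<inter> RC_ball cmp k z = {}))"

end

theory Submission
  imports Defs
begin

definition pal :: "(nat \<Rightarrow> nat) \<Rightarrow> nat list \<Rightarrow> nat \<Rightarrow> nat \<Rightarrow> bool" where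
  "pal cmp w e r \<longleftrightarrow> r \<le> e \<and> e + r \<le> length w \<and> (\<forall>t<r. w!(e+t) = cmp (w!(e-1-t)))"

definition palfree :: "(nat \<Rightarrow> nat) \<Rightarrow> nat \<Rightarrow> nat list \<Rightarrow> bool" where
  "palfree cmp m w \<longleftrightarrow> (\<forall>e. \<not> pal cmp w e m)"

lemma card_words: "card (words q n) = q ^ n"
proof -
  have "words q n = {xs. set xs \<subseteq> {..<q} \<and> length xs = n}"
    unfolding words_def by auto
  thus ?thesis using card_lists_length_eq[of "{..<q}" n] by simp
qed

lemma finite_words: "finite (words q n)"
proof -
  have "words q n = {xs. set xs \<subseteq> {..<q} \<and> length xs = n}"
    unfolding words_def by auto
  thus ?thesis using finite_lists_length_eq[of "{..<q}" n] by simp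
qed

lemma card_pal_set:
  assumes "m \<le> e" "e + m \<le> n"
  shows "card {x\<in>words q n. pal cmp x e m} \<le> q ^ (n - m)"
proof -
  let ?f = "\<lambda>x. take e x @ drop (e+m) x"
  have inj: "inj_on ?f {x\<in>words q n. pal cmp x e m}"
  proof (rule inj_onI)
    fix x y assume x: "x \<in> {x\<in>words q n. pal cmp x e m}" and y: "y \<in> {x\<in>words q n. pal cmp x e m}"
      and eq: "?f x = ?f y"
    have lx: "length x = n" and ly: "length y = n" using x y by (auto simp: words_def)
    have tk: "take e x = take e y" using eq lx ly assms
      by (metis append_eq_append_conv length_take min.absorb2 le_add1 order_trans)
    have dr: "drop (e+m) x = drop (e+m) y" using eq tk by simp
    have lo: "\<And>i. i < e \<Longrightarrow> x!i = y!i" using tk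
      by (metis nth_take)
    have hi: "x!i = y!i" if "e + m \<le> i" "i < n" for i
    proof -
      have "x!i = drop (e+m) x ! (i - (e+m))" using that lx by simp
      also have "\<dots> = drop (e+m) y ! (i - (e+m))" using dr by simp
      also have "\<dots> = y!i" using that ly by simp
      finally show ?thesis .
    qed
    show "x = y"
    proof (rule nth_equalityI)
      show "length x = length y" using lx ly by simp
      fix i assume "i < length x"
      show "x!i = y!i"
      proof (cases "i < e")
        case True thus ?thesis by (rule lo)
      next
        case False
        show ?thesis
        proof (cases "i < e + m")
          case True
          define t where "t = i - e"
          have t: "t < m" "i = e + t" using True False t_def by auto
          have "x!(e+t) = cmp (x!(e-1-t))" using x t unfolding pal_def by auto
          moreover have "y!(e+t) = cmp (y!(e-1-t))" using y t unfolding pal_def by auto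
          moreover have "x!(e-1-t) = y!(e-1-t)" using lo t assms by simp
          ultimately show ?thesis using t by simp
        next
          case False thus ?thesis using hi \<open>i < length x\<close> lx by simp
        qed
      qed
    qed
  qed
  have img: "?f ` {x\<in>words q n. pal cmp x e m} \<subseteq> words q (n - m)"
    using assms by (auto simp: words_def dest!: in_set_takeD in_set_dropD)
  have "card {x\<in>words q n. pal cmp x e m} = card (?f ` {x\<in>words q n. pal cmp x e m})"
    using inj by (simp add: card_image)
  also have "\<dots> \<le> card (words q (n-m))" using img finite_words by (rule card_mono[rotated])
  finally show ?thesis by (simp add: card_words)
qed

lemma card_bad:
  assumes "2 * (n+1) \<le> q ^ m"
  shows "2 * card {x\<in>words q n. \<not> palfree cmp m x} \<le> q ^ n"
proof (cases "m \<le> n")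
  case True
  have sub: "{x\<in>words q n. \<not> palfree cmp m x} \<subseteq> (\<Union>e\<in>{..n}. {x\<in>words q n. pal cmp x e m})"
  proof
    fix x assume x: "x \<in> {x\<in>words q n. \<not> palfree cmp m x}"
    then obtain e where e: "pal cmp x e m" unfolding palfree_def by auto
    hence "e \<le> n" using x unfolding pal_def words_def by auto
    thus "x \<in> (\<Union>e\<in>{..n}. {x\<in>words q n. pal cmp x e m})" using e x by auto
  qed
  have "card {x\<in>words q n. \<not> palfree cmp m x} \<le> card (\<Union>e\<in>{..n}. {x\<in>words q n. pal cmp x e m})"
    by (rule card_mono[OF _ sub]) (simp add: finite_words)
  also have "\<dots> \<le> (\<Sum>e\<in>{..n}. card {x\<in>words q n. pal cmp x e m})"
    by (rule card_UN_le) simp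
  also have "\<dots> \<le> (\<Sum>e\<in>{..n}. q ^ (n - m))"
  proof (rule sum_mono)
    fix e assume "e \<in> {..n}"
    show "card {x\<in>words q n. pal cmp x e m} \<le> q ^ (n - m)"
    proof (cases "m \<le> e \<and> e + m \<le> n")
      case True thus ?thesis using card_pal_set by blast
    next
      case False
      hence "{x\<in>words q n. pal cmp x e m} = {}" unfolding pal_def words_def by auto
      thus ?thesis by (metis card.empty le0)
    qed
  qed
  also have "\<dots> = (n+1) * q ^ (n - m)" by simp
  finally have "2 * card {x\<in>words q n. \<not> palfree cmp m x} \<le> 2 * (n+1) * q ^ (n - m)" by simp
  also have "\<dots> \<le> q ^ m * q ^ (n - m)" using assms by (intro mult_right_mono) auto
  also have "\<dots> = q ^ n" using True by (simp add: power_add[symmetric])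
  finally show ?thesis .
next
  case False
  hence "{x\<in>words q n. \<not> palfree cmp m x} = {}" unfolding palfree_def pal_def words_def by auto
  thus ?thesis by (metis card.empty le0 mult_0_right)
qed

lemma greedy:
  assumes "finite V" "\<And>v. v \<in> V \<Longrightarrow> card {u\<in>V. R v u} \<le> D" "\<And>x z. R x z \<Longrightarrow> R z x"
  shows "\<exists>C\<subseteq>V. card V \<le> (D+1) * card C \<and> (\<forall>x\<in>C. \<forall>z\<in>C. x \<noteq> z \<longrightarrow> \<not> R x z)"
  using assms(1,2)
proof (induction V rule: finite_psubset_induct)
  case (psubset V)
  show ?case
  proof (cases "V = {}")
    case True thus ?thesis by auto
  next
    case False
    then obtain v where v: "v \<in> V" by auto
    define N where "N = {u\<in>V. R v u}"
    define V' where "V' = V - {v} - N"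
    have sub: "V' \<subset> V" using v V'_def by auto
    have deg: "\<And>w. w \<in> V' \<Longrightarrow> card {u\<in>V'. R w u} \<le> D"
    proof -
      fix w assume w: "w \<in> V'"
      have "card {u\<in>V'. R w u} \<le> card {u\<in>V. R w u}"
        using psubset.hyps V'_def by (intro card_mono) auto
      moreover have "w \<in> V" using w V'_def by simp
      ultimately show "card {u\<in>V'. R w u} \<le> D" using psubset.prems by (meson le_trans)
    qed
    obtain C' where C': "C' \<subseteq> V'" "card V' \<le> (D+1) * card C'"
      "\<forall>x\<in>C'. \<forall>z\<in>C'. x \<noteq> z \<longrightarrow> \<not> R x z" using psubset.IH[OF sub deg] by blast
    have fV': "finite V'" using psubset.hyps V'_def by simp
    have fC': "finite C'" using C'(1) fV' finite_subset by blast
    have vC: "v \<notin> C'" using C'(1) V'_def by auto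
    have fN: "finite (insert v N)" using psubset.hyps N_def by simp
    have "V \<subseteq> V' \<union> insert v N" using V'_def by auto
    hence c1: "card V \<le> card (V' \<union> insert v N)"
      using fV' fN by (intro card_mono) auto
    have c2: "card (V' \<union> insert v N) \<le> card V' + card (insert v N)" by (rule card_Un_le)
    have c3: "card (insert v N) \<le> Suc (card N)"
      using fN by (simp add: card_insert_if)
    have c4: "card N \<le> D" using psubset.prems v N_def by simp
    have c5: "card (insert v C') = Suc (card C')" using fC' vC by simp
    have c: "card V \<le> (D+1) * card (insert v C')"
      using c1 c2 c3 c4 c5 C'(2) by simp
    have "\<forall>x\<in>insert v C'. \<forall>z\<in>insert v C'. x \<noteq> z \<longrightarrow> \<not> R x z"
    proof (intro ballI impI)
      fix x z assume x: "x \<in> insert v C'" and z: "z \<in> insert v C'" and ne: "x \<noteq> z"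
      have nv: "\<And>u. u \<in> C' \<Longrightarrow> \<not> R v u" using C'(1) V'_def N_def by auto
      show "\<not> R x z"
      proof (cases "x = v")
        case True thus ?thesis using z ne nv by auto
      next
        case False
        note xC = False
        show ?thesis
        proof (cases "z = v")
          case True thus ?thesis using x xC nv assms(3) by blast
        next
          case False thus ?thesis using x z xC ne C'(3) by auto
        qed
      qed
    qed
    moreover have "insert v C' \<subseteq> V" using C'(1) v V'_def by auto
    ultimately show ?thesis using c by blast
  qed
qed


lemma rcdup_props:
  fixes cmp :: "nat \<Rightarrow> nat"
  assumes "a + k \<le> length x"
  defines "y \<equiv> RC_dup cmp k (Suc a) x"
  shows "length y = length x + k"
    and "\<forall>t<k. y!(a+k+t) = cmp (y!(a+k-1-t))"
    and "x = take (a+k) y @ drop (a+k+k) y"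
    and "set y \<subseteq> set x \<union> cmp ` set x"
proof -
  define v where "v = take k (drop a x)"
  have lv: "length v = k" using assms(1) v_def by simp
  have ly: "y = take a x @ v @ rev (map cmp v) @ drop (a+k) x"
    unfolding y_def RC_dup_def rc_def v_def by (simp add: Let_def)
  show "length y = length x + k" using ly lv assms(1) by simp
  have tk: "take a x @ v = take (a+k) x" unfolding v_def by (simp add: take_add)
  show "\<forall>t<k. y!(a+k+t) = cmp (y!(a+k-1-t))"
  proof (intro allI impI)
    fix t assume t: "t < k"
    have la: "length (take a x) = a" using assms(1) by simp
    have "y!(a+k+t) = (rev (map cmp v) @ drop (a+k) x) ! t"
      using ly la lv by (simp add: nth_append)
    also have "\<dots> = cmp (v ! (k-1-t))" using t lv by (simp add: nth_append rev_nth)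
    finally have 1: "y!(a+k+t) = cmp (v ! (k-1-t))" .
    have "y!(a+k-1-t) = (take a x @ v) ! (a + (k-1-t))"
      using ly la lv t by (simp add: nth_append)
    also have "\<dots> = v ! (k-1-t)" using la by (simp add: nth_append)
    finally show "y!(a+k+t) = cmp (y!(a+k-1-t))" using 1 by simp
  qed
  have "take (a+k) y = take a x @ v" using ly lv assms(1) by simp
  moreover have "drop (a+k+k) y = drop (a+k) x" using ly lv assms(1) by simp
  ultimately show "x = take (a+k) y @ drop (a+k+k) y" using tk by simp
  show "set y \<subseteq> set x \<union> cmp ` set x" using ly v_def
    by (auto dest: in_set_takeD in_set_dropD)
qed

lemma core:
  assumes inv: "\<forall>a<q. cmp a < q \<and> cmp (cmp a) = a"
    and yq: "\<forall>a\<in>set y. a < q"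
    and P1: "\<forall>t<k. y!(c+t) = cmp (y!(c-1-t))"
    and P2: "\<forall>t<k. y!(c'+t) = cmp (y!(c'-1-t))"
    and cc: "c < c'" and kc: "k \<le> c" and cl: "c' + k \<le> length y" and mk: "4*m \<le> k" and m1: "1 \<le> m"
    and fx: "palfree cmp m (take c y @ drop (c+k) y)"
    and fz: "palfree cmp m (take c' y @ drop (c'+k) y)"
  shows False
proof -
  define d where "d = c' - c"
  have c'd: "c' = c + d" using cc d_def by simp
  have yv: "\<And>p. p < length y \<Longrightarrow> y!p < q" using yq by auto
  have cc2: "\<And>a b. a < q \<Longrightarrow> b < q \<Longrightarrow> cmp a = cmp b \<Longrightarrow> a = b" using inv by metis
  show False
  proof (cases "m \<le> d")
    case True
    define z where "z = take c' y @ drop (c'+k) y"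
    have zy: "z!p = y!p" if "p < c'" for p
      using that cl unfolding z_def by (simp add: nth_append)
    have lz: "length z = length y - k" using cl unfolding z_def by simp
    have "pal cmp z c m"
      unfolding pal_def
    proof (intro conjI allI impI)
      show "m \<le> c" using mk kc by simp
      show "c + m \<le> length z" using lz True c'd cl by simp
      fix t assume t: "t < m"
      have "z!(c+t) = y!(c+t)" using zy t True c'd by simp
      also have "\<dots> = cmp (y!(c-1-t))" using P1 t mk by simp
      also have "y!(c-1-t) = z!(c-1-t)" using zy cc by simp
      finally show "z!(c+t) = cmp (z!(c-1-t))" .
    qed
    thus False using fz unfolding palfree_def z_def by blast
  next
    case False
    hence dm: "d < m" by simp
    have d0: "0 < d" using d_def cc by simp
    have per: "y!(p+2*d) = y!p" if p1: "c - k \<le> p" and p2: "p + d < c + k" for p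
    proof (cases "p < c")
      case True
      define t where "t = c - 1 - p"
      have t: "t < k" "c + t = 2*c-1-p" "c-1-t = p" using True p1 kc t_def by auto
      have e1: "y!(2*c-1-p) = cmp (y!p)" using P1 t by metis
      show ?thesis
      proof (cases "p + d \<le> c - 1")
        case True
        define s where "s = c-1-p-d"
        have s: "s < k" "c'+s = 2*c-1-p" "c'-1-s = p+2*d" using True t c'd s_def by auto
        have "y!(2*c-1-p) = cmp (y!(p+2*d))" using P2 s by metis
        hence "cmp (y!p) = cmp (y!(p+2*d))" using e1 by simp
        moreover have "p < length y" "p+2*d < length y" using True c'd cl d0 by auto
        ultimately show ?thesis using cc2 yv by metis
      next
        case False
        define s where "s = p+d-c"
        have s: "s < k" "c'+s = p+2*d" "c'-1-s = 2*c-1-p" using False True p2 c'd s_def by auto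
        have "y!(p+2*d) = cmp (y!(2*c-1-p))" using P2 s by metis
        also have "\<dots> = y!p" using e1 inv yv[of p] True kc cl cc by simp
        finally show ?thesis .
      qed
    next
      case False
      define t where "t = p - c"
      have t: "t < k" "c + t = p" "c-1-t = 2*c-1-p" using False p2 t_def by auto
      have e1: "y!p = cmp (y!(2*c-1-p))" using P1 t by metis
      define s where "s = p+d-c"
      have s: "s < k" "c'+s = p+2*d" "c'-1-s = 2*c-1-p" using False p2 c'd s_def by auto
      have "y!(p+2*d) = cmp (y!(2*c-1-p))" using P2 s by metis
      thus ?thesis using e1 by simp
    qed
    have iter: "c - k \<le> p \<longrightarrow> p + 2*j*d < c + k + d \<longrightarrow> y!(p+2*j*d) = y!p" for j p
    proof (induction j)
      case 0 show ?case by simp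
    next
      case (Suc j)
      show ?case
      proof (intro impI)
        assume a1: "c - k \<le> p" and a2: "p + 2*Suc j*d < c + k + d"
        have "y!(p+2*Suc j*d) = y!((p+2*j*d) + 2*d)" by (simp add: algebra_simps)
        also have "\<dots> = y!(p+2*j*d)" using per[of "p+2*j*d"] a1 a2 by (simp add: algebra_simps)
        also have "\<dots> = y!p" using Suc a1 a2 by (simp add: algebra_simps)
        finally show "y!(p+2*Suc j*d) = y!p" .
      qed
    qed
    define j where "j = m div (2*d) + 1"
    define J where "J = 2*j*d"
    have Jeq: "J = 2*d*(m div (2*d)) + 2*d" unfolding J_def j_def by (simp add: algebra_simps)
    have mdm: "m = 2*d*(m div (2*d)) + m mod (2*d)" by simp
    have "m mod (2*d) < 2*d" using d0 by simp
    hence J1: "m < J" using Jeq mdm by linarith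
    have J2: "J \<le> m + 2*d" using Jeq mdm by linarith
    define e where "e = c - J"
    define x where "x = take c y @ drop (c+k) y"
    have xy: "x!p = y!p" if "p < c" for p
      using that cl cc unfolding x_def by (simp add: nth_append)
    have lx: "c \<le> length x" using cl cc unfolding x_def by simp
    have Jk: "J + m \<le> k" using J2 dm mk by simp
    have "pal cmp x e m"
      unfolding pal_def
    proof (intro conjI allI impI)
      show "m \<le> e" using Jk kc e_def J2 dm mk by simp
      show "e + m \<le> length x" using lx J1 e_def Jk kc by simp
      fix t assume t: "t < m"
      have eJ: "e + J = c" using e_def Jk kc by simp
      have "x!(e+t) = y!(e+t)" using xy t J1 eJ by simp
      also have "\<dots> = y!(e+t+J)" using iter[of "e+t" j] t Jk kc eJ mk unfolding J_def
        by (simp add: algebra_simps)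
      also have "e+t+J = c + t" using eJ by simp
      also have "y!(c+t) = cmp (y!(c-1-t))" using P1 t mk by simp
      also have "c-1-t = (e-1-t) + J" using eJ Jk t kc J1 by simp
      also have "y!((e-1-t) + J) = y!(e-1-t)" using iter[of "e-1-t" j] t Jk kc eJ mk unfolding J_def
        by (simp add: algebra_simps)
      also have "y!(e-1-t) = x!(e-1-t)" using xy eJ J1 by simp
      finally show "x!(e+t) = cmp (x!(e-1-t))" .
    qed
    thus False using fx unfolding palfree_def x_def by blast
  qed
qed


definition Rel :: "(nat \<Rightarrow> nat) \<Rightarrow> nat list \<Rightarrow> nat list \<Rightarrow> bool" where
  "Rel cmp x z \<longleftrightarrow> x \<noteq> z \<and> (\<exists>k\<ge>1. RC_ball cmp k x \<inter> RC_ball cmp k z \<noteq> {})"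

lemma sep:
  assumes inv: "\<forall>a<q. cmp a < q \<and> cmp (cmp a) = a"
    and x: "x \<in> words q n" and u: "u \<in> words q n"
    and fx: "palfree cmp m x" and fu: "palfree cmp m u"
    and m1: "1 \<le> m" and mk: "4*m \<le> k" and i1: "1 \<le> i" and j1: "1 \<le> j"
    and ik: "i - 1 + k \<le> n" and jk: "j - 1 + k \<le> n"
    and eq: "RC_dup cmp k i x = RC_dup cmp k j u"
  shows "x = u"
proof -
  define a where "a = i - 1"
  define b where "b = j - 1"
  have ia: "i = Suc a" and jb: "j = Suc b" using i1 j1 a_def b_def by auto
  have lx: "length x = n" and lu: "length u = n" using x u by (auto simp: words_def)
  define y where "y = RC_dup cmp k i x"
  have ax: "a + k \<le> length x" using ik lx a_def by simp
  have bu: "b + k \<le> length u" using jk lu b_def by simp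
  note px = rcdup_props[OF ax, of cmp, folded ia, folded y_def]
  note pu = rcdup_props[OF bu, of cmp, folded jb, folded eq, folded y_def]
  have yq: "\<forall>a\<in>set y. a < q"
  proof
    fix v assume "v \<in> set y"
    hence "v \<in> set x \<union> cmp ` set x" using px(4) by blast
    thus "v < q" using x inv unfolding words_def by auto
  qed
  show ?thesis
  proof (cases "a = b")
    case True thus ?thesis using px(3) pu(3) by simp
  next
    case False
    show ?thesis
    proof (cases "a < b")
      case True
      have False
        by (rule core[OF inv yq px(2) pu(2), of m]) (use True px(1) pu(1) lx lu bu mk m1 px(3)[symmetric] pu(3)[symmetric] fx fu in auto)
      thus ?thesis ..
    next
      case False
      hence ba: "b < a" using \<open>a \<noteq> b\<close> by simp
      have False
        by (rule core[OF inv yq pu(2) px(2), of m]) (use ba px(1) pu(1) lx lu ax mk m1 px(3)[symmetric] pu(3)[symmetric] fx fu in auto)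
      thus ?thesis ..
    qed
  qed
qed

lemma degree:
  assumes inv: "\<forall>a<q. cmp a < q \<and> cmp (cmp a) = a" and m1: "1 \<le> m"
    and x: "x \<in> {x\<in>words q n. palfree cmp m x}"
  shows "card {u\<in>{x\<in>words q n. palfree cmp m x}. Rel cmp x u} \<le> 4*m*n^2"
proof -
  let ?S = "{x\<in>words q n. palfree cmp m x}"
  let ?f = "\<lambda>(k,i,j). take (j-1+k) (RC_dup cmp k i x) @ drop (j-1+k+k) (RC_dup cmp k i x)"
  have lx: "length x = n" using x by (simp add: words_def)
  have sub: "{u\<in>?S. Rel cmp x u} \<subseteq> ?f ` ({1..<4*m} \<times> {1..n} \<times> {1..n})"
  proof
    fix u assume u: "u \<in> {u\<in>?S. Rel cmp x u}"
    have lu: "length u = n" using u by (simp add: words_def)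
    obtain k y where k1: "k \<ge> 1" and yx: "y \<in> RC_ball cmp k x" and yu: "y \<in> RC_ball cmp k u"
      using u unfolding Rel_def by blast
    have kn: "k \<le> n" using yx lx unfolding RC_ball_def by (auto split: if_splits)
    obtain i where i: "1 \<le> i" "i \<le> n - k + 1" "y = RC_dup cmp k i x"
      using yx kn lx unfolding RC_ball_def by auto
    obtain j where j: "1 \<le> j" "j \<le> n - k + 1" "y = RC_dup cmp k j u"
      using yu kn lu unfolding RC_ball_def by auto
    have "k < 4*m"
    proof (rule ccontr)
      assume "\<not> k < 4*m"
      hence mk: "4*m \<le> k" by simp
      have xw: "x \<in> words q n" "palfree cmp m x" using x by auto
      have uw: "u \<in> words q n" "palfree cmp m u" using u by auto
      have ik: "i - 1 + k \<le> n" and jk: "j - 1 + k \<le> n" using i j kn k1 by auto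
      have "RC_dup cmp k i x = RC_dup cmp k j u" using i(3) j(3) by simp
      hence "x = u" using sep[OF inv xw(1) uw(1) xw(2) uw(2) m1 mk i(1) j(1) ik jk] by simp
      thus False using u unfolding Rel_def by simp
    qed
    moreover have "u = ?f (k,i,j)"
    proof -
      have bu: "(j-1) + k \<le> length u" using j kn lu by simp
      have "Suc (j-1) = j" using j by simp
      hence "u = take (j-1+k) (RC_dup cmp k j u) @ drop (j-1+k+k) (RC_dup cmp k j u)"
        using rcdup_props(3)[OF bu, of cmp] by simp
      thus ?thesis using i(3) j(3) by simp
    qed
    moreover have "(k,i,j) \<in> {1..<4*m} \<times> {1..n} \<times> {1..n}" using k1 i j kn calculation(1) by auto
    ultimately show "u \<in> ?f ` ({1..<4*m} \<times> {1..n} \<times> {1..n})"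
      by (intro image_eqI[of _ _ "(k,i,j)"]) auto
  qed
  have "card {u\<in>?S. Rel cmp x u} \<le> card (?f ` ({1..<4*m} \<times> {1..n} \<times> {1..n}))"
    by (rule card_mono[OF _ sub]) simp
  also have "\<dots> \<le> card ({1..<4*m} \<times> {1..n} \<times> {1..n})" by (rule card_image_le) simp
  also have "\<dots> = (4*m - 1) * (n * n)" by (simp add: card_cartesian_product)
  also have "\<dots> \<le> 4*m*n^2" by (simp add: power2_eq_square)
  finally show ?thesis .
qed

lemma code_exists:
  assumes inv: "\<forall>a<q. cmp a < q \<and> cmp (cmp a) = a" and m1: "1 \<le> m" and qm: "2*(n+1) \<le> q^m"
  shows "\<exists>C. C \<subseteq> words q n \<and> corrects_RC_dup cmp C \<and> q^n \<le> 2*(4*m*n^2+1) * card C"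
proof -
  let ?S = "{x\<in>words q n. palfree cmp m x}"
  let ?B = "{x\<in>words q n. \<not> palfree cmp m x}"
  have fS: "finite ?S" using finite_words by simp
  have fB: "finite ?B" using finite_words by simp
  have U: "?S \<union> ?B = words q n" by auto
  have "card (?S \<union> ?B) = card ?S + card ?B" by (rule card_Un_disjoint[OF fS fB]) auto
  hence "card ?S + card ?B = card (words q n)" unfolding U by simp
  hence cS: "q^n \<le> 2 * card ?S" using card_bad[OF qm, of cmp] card_words[of q n] by simp
  obtain C where C: "C \<subseteq> ?S" "card ?S \<le> (4*m*n^2+1) * card C"
    "\<forall>x\<in>C. \<forall>z\<in>C. x \<noteq> z \<longrightarrow> \<not> Rel cmp x z"
    using greedy[OF fS, of "Rel cmp" "4*m*n^2"] degree[OF inv m1] unfolding Rel_def by blast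
  have "corrects_RC_dup cmp C" using C(3) unfolding corrects_RC_dup_def Rel_def by blast
  moreover have "q^n \<le> 2*(4*m*n^2+1) * card C" using cS C(2) by simp
  moreover have "C \<subseteq> words q n" using C(1) by auto
  ultimately show ?thesis by blast
qed


lemma n_le_qn: assumes "(q::nat) \<ge> 2" shows "n < q ^ n"
proof -
  have "n < 2 ^ n" by (rule less_exp)
  also have "(2::nat) ^ n \<le> q ^ n" using assms by (intro power_mono) auto
  finally show ?thesis .
qed

lemma per_n:
  assumes inv: "\<forall>a<q. cmp a < q \<and> cmp (cmp a) = a" and q2: "q \<ge> 2" and qn: "q \<le> n"
  shows "\<exists>C. C \<subseteq> words q n \<and> C \<noteq> {} \<and> corrects_RC_dup cmp C \<and>
     real n - log q (card C) \<le> 2 * log q n + log q (log q n) + (log q 10 + log q 4)"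
proof -
  define m where "m = (LEAST m. 2*(n+1) \<le> q^m)"
  have ex: "2*(n+1) \<le> q^(2*(n+1))" using n_le_qn[OF q2, of "2*(n+1)"] by simp
  have mP: "2*(n+1) \<le> q^m" unfolding m_def by (rule LeastI[of "\<lambda>m. 2*(n+1) \<le> q^m", OF ex])
  have m1: "1 \<le> m"
  proof (rule ccontr)
    assume "\<not> 1 \<le> m" hence "m = 0" by simp
    thus False using mP by simp
  qed
  have mlt: "q^(m-1) < 2*(n+1)"
  proof -
    have "\<not> 2*(n+1) \<le> q^(m-1)" unfolding m_def
      by (rule not_less_Least) (use m1 m_def in simp)
    thus ?thesis by simp
  qed
  obtain C where C: "C \<subseteq> words q n" "corrects_RC_dup cmp C" "q^n \<le> 2*(4*m*n^2+1) * card C"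
    using code_exists[OF inv m1 mP] by blast
  have n1: "1 \<le> n" using q2 qn by simp
  have qpos: "0 < q^n" using q2 by simp
  hence N0: "card C \<noteq> 0" using C(3) by (metis mult_0_right not_le)
  hence Cne: "C \<noteq> {}" by auto
  define N where "N = card C"
  have Npos: "0 < real N" using N0 N_def by simp
  have q1: "(1::real) < real q" using q2 by simp
  have nat1: "2*(4*m*n^2+1) \<le> 10*m*n^2"
  proof -
    have "1 \<le> m*n^2" using m1 n1 by simp
    thus ?thesis by simp
  qed
  have "q^n \<le> 10*m*n^2*N" using C(3) nat1 N_def
    by (metis mult_le_mono1 order_trans)
  hence r1: "real q ^ n \<le> 10 * real m * real n ^ 2 * real N"
    by (metis of_nat_le_iff of_nat_mult of_nat_numeral of_nat_power)
  have "real n = log q (real q ^ n)" using q1 by simp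
  also have "\<dots> \<le> log q (10 * real m * real n ^ 2 * real N)"
    using r1 q1 by (intro log_mono) auto
  also have "\<dots> = log q 10 + log q m + 2 * log q n + log q N"
    using m1 n1 Npos by (simp add: log_mult log_nat_power)
  finally have r2: "real n \<le> log q 10 + log q m + 2 * log q n + log q N" .
  have ln1: "1 \<le> log q n"
  proof -
    have "log q q \<le> log q n" using q1 qn by (intro log_mono) auto
    thus ?thesis using q1 by simp
  qed
  have l4: "log q 4 \<le> 2"
  proof -
    have "(2::real) \<le> real q" using q2 by simp
    hence "(2::real)^2 \<le> real q ^ 2" by (intro power_mono) auto
    hence "(4::real) \<le> real q ^ 2" by simp
    hence "log q 4 \<le> log q (real q ^ 2)" using q1 by (intro log_mono) auto
    thus ?thesis using q1 by simp
  qed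
  have "real (q^(m-1)) < real (2*(n+1))" using mlt by (simp only: of_nat_less_iff)
  hence "real q ^ (m-1) < 2*(real n+1)" by simp
  also have "\<dots> \<le> 4 * real n" using n1 by simp
  finally have "log q (real q ^ (m-1)) < log q (4 * real n)" using q1 n1 by (subst log_less_cancel_iff) auto
  hence "real (m-1) < log q 4 + log q n" using q1 n1 by (simp add: log_mult)
  hence "real m < 3 + log q n" using l4 m1 by linarith
  hence mb: "real m \<le> 4 * log q n" using ln1 by linarith
  have "log q m \<le> log q (4 * log q n)" using m1 mb q1 by (intro log_mono) auto
  also have "\<dots> = log q 4 + log q (log q n)" using ln1 by (simp add: log_mult)
  finally have "log q m \<le> log q 4 + log q (log q n)" .
  hence "real n - log q N \<le> 2 * log q n + log q (log q n) + (log q 10 + log q 4)" using r2 by linarith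
  thus ?thesis using C Cne N_def by blast
qed


theorem theorem3:
  fixes q :: nat and cmp :: "nat \<Rightarrow> nat"
  assumes "q \<ge> 2" and "even q" and "complement_op q cmp"
  shows "\<exists>(c::real) (C :: nat \<Rightarrow> nat list set).
           (\<forall>n\<ge>q. C n \<subseteq> words q n \<and> C n \<noteq> {} \<and> corrects_RC_dup cmp (C n) \<and>
               real n - log q (card (C n)) \<le> 2 * log q n + log q (log q n) + c)
         \<and> ((\<lambda>n. log q (card (C n)) / real n) \<longlonglongrightarrow> 1)"
proof -
  have inv: "\<forall>a<q. cmp a < q \<and> cmp (cmp a) = a" using assms(3) unfolding complement_op_def by blast
  define c :: real where "c = log q 10 + log q 4"
  have "\<forall>n. \<exists>C. q \<le> n \<longrightarrow> (C \<subseteq> words q n \<and> C \<noteq> {} \<and> corrects_RC_dup cmp C \<and>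
     real n - log q (card C) \<le> 2 * log q n + log q (log q n) + c)"
    using per_n[OF inv assms(1)] unfolding c_def by blast
  then obtain C where C: "\<And>n. q \<le> n \<Longrightarrow> C n \<subseteq> words q n \<and> C n \<noteq> {} \<and> corrects_RC_dup cmp (C n) \<and>
     real n - log q (card (C n)) \<le> 2 * log q n + log q (log q n) + c"
    by metis
  have q1: "(1::real) < real q" using assms(1) by simp
  define f where "f = (\<lambda>n::nat. 1 - ((3/ln q) * (ln (real n) / real n) + c / real n))"
  have lnlim: "(\<lambda>n. ln (real n) / real n) \<longlonglongrightarrow> 0"
    using filterlim_compose[OF ln_x_over_x_tendsto_0 filterlim_real_sequentially] by (simp add: o_def)
  have flim: "f \<longlonglongrightarrow> 1"
  proof -
    have "(\<lambda>n. (3/ln q) * (ln (real n) / real n) + c / real n) \<longlonglongrightarrow> (3/ln q) * 0 + 0"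
      by (intro tendsto_add tendsto_mult tendsto_const lnlim lim_const_over_n)
    hence "(\<lambda>n. 1 - ((3/ln q) * (ln (real n) / real n) + c / real n)) \<longlonglongrightarrow> 1 - ((3/ln q) * 0 + 0)"
      by (intro tendsto_diff tendsto_const)
    thus ?thesis unfolding f_def by simp
  qed
  have bounds: "f n \<le> log q (card (C n)) / real n \<and> log q (card (C n)) / real n \<le> 1" if qn: "q \<le> n" for n
  proof -
    have Cn: "C n \<subseteq> words q n" "C n \<noteq> {}"
      and red: "real n - log q (card (C n)) \<le> 2 * log q n + log q (log q n) + c" using C[OF qn] by auto
    have n1: "1 \<le> n" using qn assms(1) by simp
    have npos: "0 < real n" using n1 by simp
    have fin: "finite (C n)" using Cn(1) finite_words finite_subset by blast
    have Npos: "0 < real (card (C n))" using fin Cn(2) by (simp add: card_gt_0_iff)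
    have "card (C n) \<le> q ^ n" using card_mono[OF finite_words Cn(1)] card_words by metis
    hence "real (card (C n)) \<le> real q ^ n" by (metis of_nat_le_iff of_nat_power)
    hence "log q (card (C n)) \<le> log q (real q ^ n)" using Npos q1 by (intro log_mono) auto
    hence up: "log q (card (C n)) \<le> real n" using q1 by simp
    have lnpos: "0 < log q n" using q1 qn assms(1) by simp
    have "real n < real q ^ n" unfolding of_nat_power[symmetric] of_nat_less_iff by (rule n_le_qn[OF assms(1)])
    hence "log q n < log q (real q ^ n)" using q1 npos by (subst log_less_cancel_iff) auto
    hence "log q n < real n" using q1 by simp
    hence "log q (log q n) \<le> log q n" using q1 lnpos by (intro log_mono) auto
    hence lo: "real n - 3 * log q n - c \<le> log q (card (C n))" using red by linarith
    have "f n = (real n - 3 * log q n - c) / real n"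
      unfolding f_def log_def using npos by (simp add: field_simps)
    also have "\<dots> \<le> log q (card (C n)) / real n" using lo npos by (intro divide_right_mono) auto
    finally show ?thesis using up npos by simp
  qed
  have "(\<lambda>n. log q (card (C n)) / real n) \<longlonglongrightarrow> 1"
  proof (rule tendsto_sandwich[OF _ _ flim tendsto_const])
    show "\<forall>\<^sub>F n in sequentially. f n \<le> log q (card (C n)) / real n"
      using eventually_ge_at_top[of q] by (rule eventually_mono) (use bounds in blast)
    show "\<forall>\<^sub>F n in sequentially. log q (card (C n)) / real n \<le> 1"
      using eventually_ge_at_top[of q] by (rule eventually_mono) (use bounds in blast)
  qed
  moreover have "\<forall>n\<ge>q. C n \<subseteq> words q n \<and> C n \<noteq> {} \<and> corrects_RC_dup cmp (C n) \<and>
               real n - log q (card (C n)) \<le> 2 * log q n + log q (log q n) + c" using C by blast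
  ultimately show ?thesis by blast
qed

end
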